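(* Let $k\ge 1$ and let $\Gamma\subset\mathbb{R}_+^k$ be a nonempty compact set of possible allocations. Let $X$ be a random valuation with values in $\mathbb{R}_+^k$ and finite expectation, i.e., $\mathbb{E}[\|X\|]<\infty$. Then there exists an incentive compatible and individually rational $\Gamma$-mechanism $\mu=(q,s)$ such that $R(\mu;X)=\textsc{Rev}_\Gamma(X)$.
   Context: A $\Gamma$-mechanism $\mu=(q,s)$ consists of an allocation function $q:\mathbb{R}_+^k\to\Gamma$ and a payment function $s:\mathbb{R}_+^k\to\mathbb{R}$. It is incentive compatible (IC) if $q(x)\cdot x-s(x)\ge q(y)\cdot x-s(y)$ for all $x,y\in\mathbb{R}_+^k$, and individually rational (IR) if $q(x)\cdot x-s(x)\ge 0$ for all $x\in\mathbb{R}_+^k$. The revenue of $\mu$ from $X$ is $R(\mu;X):=\mathbb{E}[s(X)]$, and $\textsc{Rev}_\Gamma(X):=\sup_\mu R(\mu;X)$, the supremum over all IC and IR $\Gamma$-mechanisms. *)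

theory Defs
  imports "HOL-Analysis.Analysis" "HOL-Probability.Probability"
begin

definition orthant :: "(real^'k) set" where
  "orthant = {x. \<forall>i. 0 \<le> x $ i}"

definition IC :: "(real^'k \<Rightarrow> real^'k) \<Rightarrow> (real^'k \<Rightarrow> real) \<Rightarrow> bool" where
  "IC q s \<longleftrightarrow> (\<forall>x\<in>orthant. \<forall>y\<in>orthant. q x \<bullet> x - s x \<ge> q y \<bullet> x - s y)"

definition IR :: "(real^'k \<Rightarrow> real^'k) \<Rightarrow> (real^'k \<Rightarrow> real) \<Rightarrow> bool" where
  "IR q s \<longleftrightarrow> (\<forall>x\<in>orthant. q x \<bullet> x - s x \<ge> 0)"

text \<open>A Gamma-mechanism: allocations lie in Gamma; the payment is Borel measurable
  so that its expectation is meaningful.\<close>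
definition mechanism :: "(real^'k) set \<Rightarrow> (real^'k \<Rightarrow> real^'k) \<Rightarrow> (real^'k \<Rightarrow> real) \<Rightarrow> bool" where
  "mechanism \<Gamma> q s \<longleftrightarrow> (\<forall>x\<in>orthant. q x \<in> \<Gamma>) \<and> s \<in> borel_measurable borel"

definition revenue :: "'a measure \<Rightarrow> ('a \<Rightarrow> real^'k) \<Rightarrow> (real^'k \<Rightarrow> real) \<Rightarrow> real" where
  "revenue M X s = (\<integral>\<omega>. s (X \<omega>) \<partial>M)"

definition Rev :: "(real^'k) set \<Rightarrow> 'a measure \<Rightarrow> ('a \<Rightarrow> real^'k) \<Rightarrow> ereal" where
  "Rev \<Gamma> M X = (SUP qs \<in> {(q, s). mechanism \<Gamma> q s \<and> IC q s \<and> IR q s}.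
                   ereal (revenue M X (snd qs)))"

end

theory Submission imports Defs "HOL-Library.Diagonal_Subsequence" begin

lemma diag_conv:
  fixes f :: "nat \<Rightarrow> 'b \<Rightarrow> real"
  assumes D: "countable D" and bd: "\<And>d. d\<in>D \<Longrightarrow> bounded (range (\<lambda>n. f n d))"
  shows "\<exists>r. strict_mono r \<and> (\<forall>d\<in>D. convergent (\<lambda>n. f (r n) d))"
proof (cases "D = {}")
  case True thus ?thesis by (intro exI[of _ id]) (auto simp: strict_mono_def)
next
  case False
  define e where "e = from_nat_into D"
  have rangeD: "range e = D" unfolding e_def using False D by (simp add: range_from_nat_into)
  let ?P = "\<lambda>n. \<lambda>s. convergent (\<lambda>k. f (s k) (e n))"
  interpret nat: subseqs ?P
  proof (unfold convergent_def, unfold subseqs_def, auto)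
    fix n :: nat and s :: "nat \<Rightarrow> nat" assume s: "strict_mono s"
    have "bounded (range (\<lambda>k. f (s k) (e n)))"
      by (rule bounded_subset[OF bd[of "e n"]]) (use rangeD in auto)
    then obtain l r where "strict_mono (r::nat\<Rightarrow>nat)" "((\<lambda>k. f (s k) (e n)) \<circ> r) \<longlonglongrightarrow> l"
      using bounded_imp_convergent_subsequence by blast
    thus "\<exists>s'. strict_mono (s'::nat\<Rightarrow>nat) \<and> (\<exists>l. (\<lambda>k. f (s (s' k)) (e n)) \<longlonglongrightarrow> l)"
      by (auto simp: comp_def)
  qed
  define d where "d = nat.diagseq"
  have subseq: "strict_mono d"
    unfolding d_def using nat.subseq_diagseq by auto
  have rat_cnv: "?P n d" for n
  proof -
    have Pn_seqseq: "?P n (nat.seqseq (Suc n))"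
      by (rule nat.seqseq_holds)
    have 1: "(\<lambda>k. f ((nat.seqseq (Suc n) \<circ> (\<lambda>k. nat.fold_reduce (Suc n) k
      (Suc n + k))) k) (e n)) = (\<lambda>k. f (nat.seqseq (Suc n) k) (e n)) \<circ>
      (\<lambda>k. nat.fold_reduce (Suc n) k (Suc n + k))"
      by auto
    have 2: "?P n (d \<circ> ((+) (Suc n)))"
      unfolding d_def nat.diagseq_seqseq 1
      by (intro convergent_subseq_convergent Pn_seqseq nat.subseq_diagonal_rest)
    then obtain L where 3: "(\<lambda>na. f (d (na + Suc n)) (e n)) \<longlonglongrightarrow> L"
      by (auto simp: add.commute dest: convergentD)
    then have "(\<lambda>k. f (d k) (e n)) \<longlonglongrightarrow> L"
      by (rule LIMSEQ_offset)
    then show ?thesis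
      by (auto simp: convergent_def)
  qed
  show ?thesis using subseq rat_cnv rangeD by auto
qed

lemma dense_orthant:
  obtains D :: "(real^'k) set" where "countable D" "D \<subseteq> orthant"
    "\<And>x \<delta>. x \<in> orthant \<Longrightarrow> \<delta> > 0 \<Longrightarrow> \<exists>d\<in>D. dist d x < \<delta>"
proof -
  obtain D0 :: "(real^'k) set" where D0: "countable D0" "\<And>X. open X \<Longrightarrow> X \<noteq> {} \<Longrightarrow> \<exists>d \<in> D0. d \<in> X"
    using countable_dense_setE by blast
  define c :: "real^'k" where "c = (\<chi> i. 1)"
  have "\<exists>d\<in>D0 \<inter> orthant. dist d x < \<delta>" if x: "x \<in> orthant" and d: "\<delta> > 0" for x \<delta>
  proof -
    define t where "t = \<delta> / (2 * (norm c + 1))"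
    have "0 < 2*(norm c+1)" by (smt (verit) norm_ge_zero)
    hence t: "t > 0" using d unfolding t_def by (rule divide_pos_pos[rotated])
    obtain z where z: "z \<in> D0" "z \<in> ball (x + t *\<^sub>R c) t" using D0(2)[of "ball (x + t *\<^sub>R c) t"] t by auto
    have "z \<in> orthant" unfolding orthant_def
    proof safe
      fix i
      have "\<bar>(x + t *\<^sub>R c - z) $ i\<bar> \<le> norm (x + t *\<^sub>R c - z)" by (rule component_le_norm_cart)
      also have "\<dots> < t" using z(2) by (simp add: dist_norm)
      finally have "\<bar>x $ i + t - z $ i\<bar> < t" by (simp add: c_def)
      moreover have "0 \<le> x $ i" using x by (auto simp: orthant_def)
      ultimately show "0 \<le> z $ i" by linarith
    qed
    moreover have "dist z x < \<delta>"
    proof -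
      have "dist z x \<le> dist z (x + t *\<^sub>R c) + dist (x + t *\<^sub>R c) x" by (rule dist_triangle)
      also have "\<dots> < t + t * norm c" using z(2) t by (simp add: dist_commute dist_norm)
      also have "\<dots> = (t * (2*(norm c+1)))/2" by (simp add: algebra_simps)
      also have "\<dots> = \<delta> / 2" using \<open>0 < 2*(norm c+1)\<close> unfolding t_def by simp
      also have "\<dots> \<le> \<delta>" using d by simp
      finally show ?thesis .
    qed
    ultimately show ?thesis using z by auto
  qed
  then show ?thesis using that[of "D0 \<inter> orthant"] D0 by auto
qed

lemma conv_from_dense:
  fixes f :: "nat \<Rightarrow> 'a::metric_space \<Rightarrow> real"
  assumes dense: "\<And>x \<delta>. x\<in>S \<Longrightarrow> \<delta>>0 \<Longrightarrow> \<exists>d\<in>D. dist d x < \<delta>" and DS: "D \<subseteq> S"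
   and lip: "\<And>n x y. x\<in>S \<Longrightarrow> y\<in>S \<Longrightarrow> \<bar>f n x - f n y\<bar> \<le> C * dist x y" and C: "C \<ge> 0"
   and conv: "\<forall>d\<in>D. convergent (\<lambda>n. f n d)"
   and x: "x\<in>S"
  shows "convergent (\<lambda>n. f n x)"
proof -
  have "Cauchy (\<lambda>n. f n x)"
  proof (rule metric_CauchyI)
    fix e :: real assume e: "0 < e"
    define \<delta> where "\<delta> = e / (4 * (C + 1))"
    have "0 < 4 * (C + 1)" using C by simp
    hence \<delta>: "0 < \<delta>" using e unfolding \<delta>_def by (rule divide_pos_pos[rotated])
    obtain d where d: "d \<in> D" "dist d x < \<delta>" using dense[OF x \<delta>] by blast
    have "Cauchy (\<lambda>n. f n d)" using conv d(1) by (simp add: Cauchy_convergent_iff)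
    then obtain M where M: "\<forall>m\<ge>M. \<forall>n\<ge>M. dist (f m d) (f n d) < e / 2"
      using e by (meson half_gt_zero metric_CauchyD)
    have Cd: "C * dist d x \<le> e / 4"
    proof -
      have "C * dist d x \<le> C * \<delta>" using d(2) C by (simp add: mult_left_mono)
      also have "\<dots> \<le> (C + 1) * \<delta>" using \<delta> by simp
      also have "\<dots> = e / 4" proof -
        have "C + 1 \<noteq> 0" using C by simp
        thus ?thesis unfolding \<delta>_def by (simp add: field_simps)
      qed
      finally show ?thesis .
    qed
    show "\<exists>M. \<forall>m\<ge>M. \<forall>n\<ge>M. dist (f m x) (f n x) < e"
    proof (intro exI allI impI)
      fix m n assume mn: "M \<le> m" "M \<le> n"
      have 1: "\<bar>f m x - f m d\<bar> \<le> C * dist d x" using lip[OF x, of d m] d DS by (auto simp: dist_commute)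
      have 2: "\<bar>f n x - f n d\<bar> \<le> C * dist d x" using lip[OF x, of d n] d DS by (auto simp: dist_commute)
      have 3: "\<bar>f m d - f n d\<bar> < e / 2" using M mn by (auto simp: dist_real_def)
      show "dist (f m x) (f n x) < e" using 1 2 3 Cd unfolding dist_real_def abs_le_iff abs_less_iff by linarith
    qed
  qed
  thus ?thesis by (simp add: Cauchy_convergent_iff)
qed

theorem theorem1:
  fixes \<Gamma> :: "(real^'k) set" and M :: "'a measure" and X :: "'a \<Rightarrow> real^'k"
  assumes "\<Gamma> \<subseteq> orthant" and "\<Gamma> \<noteq> {}" and "compact \<Gamma>"
    and "prob_space M"
    and "X \<in> borel_measurable M"
    and "\<forall>\<omega>\<in>space M. X \<omega> \<in> orthant"
    and "integrable M (\<lambda>\<omega>. norm (X \<omega>))"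
  shows "\<exists>q s. mechanism \<Gamma> q s \<and> IC q s \<and> IR q s \<and> ereal (revenue M X s) = Rev \<Gamma> M X"
proof -
  note G_orth = assms(1) and G_ne = assms(2) and G_cpt = assms(3)
  note Xm[measurable] = assms(5) and Xo = assms(6) and Xint = assms(7)
  interpret prob_space M by (rule assms(4))
  obtain C where C: "C \<ge> 0" "\<And>g. g \<in> \<Gamma> \<Longrightarrow> norm g \<le> C"
    using compact_imp_bounded[OF G_cpt] unfolding bounded_pos by (meson less_imp_le)
  have inner_bd: "0 \<le> g \<bullet> x \<and> g \<bullet> x \<le> C * norm x" if "g \<in> \<Gamma>" "x \<in> orthant" for g x
  proof
    have "g \<in> orthant" using that G_orth by auto
    thus "0 \<le> g \<bullet> x" using that(2) unfolding inner_vec_def orthant_def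
      by (auto intro!: sum_nonneg)
    have "g \<bullet> x \<le> norm g * norm x" by (rule norm_cauchy_schwarz)
    also have "\<dots> \<le> C * norm x" using C(2)[OF that(1)] by (simp add: mult_right_mono)
    finally show "g \<bullet> x \<le> C * norm x" .
  qed
  have zero_orth: "(0::real^'k) \<in> orthant" by (simp add: orthant_def)
  have orth_closed: "closed (orthant :: (real^'k) set)"
  proof -
    have eq: "orthant = (\<Inter>i. {x::real^'k. 0 \<le> x $ i})" by (auto simp: orthant_def)
    have cl: "closed {x::real^'k. 0 \<le> x $ i}" for i
      by (rule closed_Collect_le) (auto intro: continuous_intros)
    show ?thesis unfolding eq by (intro closed_INT ballI cl)
  qed
  have orth_sets[measurable]: "orthant \<in> sets (borel :: (real^'k) measure)"
    using orth_closed by auto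

  define valid where "valid q s \<longleftrightarrow> mechanism \<Gamma> q s \<and> IC q s \<and> IR q s" for q s
  define nvalid where "nvalid q s \<longleftrightarrow> valid q s \<and> s 0 = 0" for q s

  have nv_bounds: "0 \<le> s x \<and> s x \<le> C * norm x \<and> 0 \<le> q x \<bullet> x - s x \<and> q x \<bullet> x - s x \<le> C * norm x"
    if "nvalid q s" "x \<in> orthant" for q s x
  proof -
    have ic: "IC q s" and ir: "IR q s" and qx: "q x \<in> \<Gamma>"
      using that by (auto simp: nvalid_def valid_def mechanism_def)
    have "q 0 \<bullet> 0 - s 0 \<ge> q x \<bullet> 0 - s x" using ic that(2) zero_orth unfolding IC_def by blast
    hence s0: "0 \<le> s x" using that(1) by (simp add: nvalid_def)
    have "q x \<bullet> x - s x \<ge> 0" using ir that(2) unfolding IR_def by blast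
    thus ?thesis using s0 inner_bd[OF qx that(2)] by linarith
  qed
  have nv_sub: "(q x \<bullet> x - s x) + q x \<bullet> (y - x) \<le> q y \<bullet> y - s y"
    if "valid q s" "x \<in> orthant" "y \<in> orthant" for q s x y
  proof -
    have "q y \<bullet> y - s y \<ge> q x \<bullet> y - s x" using that unfolding valid_def IC_def by blast
    thus ?thesis by (simp add: inner_diff_right)
  qed
  have nv_lip: "\<bar>(q x \<bullet> x - s x) - (q y \<bullet> y - s y)\<bar> \<le> C * dist x y"
    if "valid q s" "x \<in> orthant" "y \<in> orthant" for q s x y
  proof -
    have qx: "q x \<in> \<Gamma>" "q y \<in> \<Gamma>" using that by (auto simp: valid_def mechanism_def)
    have a: "\<bar>q x \<bullet> (y - x)\<bar> \<le> C * dist x y"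
      using Cauchy_Schwarz_ineq2[of "q x" "y - x"] C(2)[OF qx(1)]
      by (smt (verit, best) dist_commute dist_norm mult_right_mono norm_ge_zero)
    have b: "\<bar>q y \<bullet> (x - y)\<bar> \<le> C * dist x y"
      using Cauchy_Schwarz_ineq2[of "q y" "x - y"] C(2)[OF qx(2)]
      by (smt (verit, best) dist_norm mult_right_mono norm_ge_zero)
    show ?thesis using nv_sub[OF that] nv_sub[OF that(1) that(3) that(2)] a b
      unfolding abs_le_iff by linarith
  qed
  have meas_X: "(\<lambda>\<omega>. s (X \<omega>)) \<in> borel_measurable M" if "valid q s" for q s
  proof -
    have "s \<in> borel_measurable borel" using that by (simp add: valid_def mechanism_def)
    thus ?thesis using Xm by (rule measurable_compose[rotated])
  qed
  have Cint: "integrable M (\<lambda>\<omega>. C * norm (X \<omega>))" using Xint by simp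
  have nv_int: "integrable M (\<lambda>\<omega>. s (X \<omega>))" if "nvalid q s" for q s
  proof (rule Bochner_Integration.integrable_bound[OF Cint])
    show "(\<lambda>\<omega>. s (X \<omega>)) \<in> borel_measurable M" using that meas_X unfolding nvalid_def by blast
    show "AE \<omega> in M. norm (s (X \<omega>)) \<le> norm (C * norm (X \<omega>))"
      using nv_bounds[OF that] Xo C(1) by (auto intro!: AE_I2)
  qed
  have rev_le: "revenue M X s \<le> C * expectation (\<lambda>\<omega>. norm (X \<omega>))" if "valid q s" for q s
  proof (cases "integrable M (\<lambda>\<omega>. s (X \<omega>))")
    case True
    have "revenue M X s \<le> expectation (\<lambda>\<omega>. C * norm (X \<omega>))"
      unfolding revenue_def
    proof (rule integral_mono[OF True Cint])
      fix \<omega> assume "\<omega> \<in> space M"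
      hence xo: "X \<omega> \<in> orthant" using Xo by auto
      have qx: "q (X \<omega>) \<in> \<Gamma>" using that xo by (auto simp: valid_def mechanism_def)
      have "q (X \<omega>) \<bullet> X \<omega> - s (X \<omega>) \<ge> 0" using that xo unfolding valid_def IR_def by blast
      thus "s (X \<omega>) \<le> C * norm (X \<omega>)" using inner_bd[OF qx xo] by linarith
    qed
    thus ?thesis by simp
  next
    case False
    hence "revenue M X s = 0" unfolding revenue_def by (simp add: not_integrable_integral_eq)
    thus ?thesis using C(1) by (simp add: integral_nonneg_AE)
  qed
  obtain g0 where g0: "g0 \<in> \<Gamma>" using G_ne by auto
  have zero_nv: "nvalid (\<lambda>_. g0) (\<lambda>_. 0)"
    using g0 inner_bd[OF g0] unfolding nvalid_def valid_def mechanism_def IC_def IR_def by auto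
  have zero_rev: "revenue M X (\<lambda>_. 0) = 0" by (simp add: revenue_def)
  have normalize: "\<exists>q' s'. nvalid q' s' \<and> revenue M X s \<le> revenue M X s'" if v: "valid q s" for q s
  proof (cases "integrable M (\<lambda>\<omega>. s (X \<omega>))")
    case True
    define s' where "s' x = s x - s 0" for x
    have s0: "s 0 \<le> 0" using v zero_orth unfolding valid_def IR_def by force
    have "nvalid q s'"
      unfolding nvalid_def valid_def
    proof (intro conjI)
      show "mechanism \<Gamma> q s'" using v unfolding valid_def mechanism_def s'_def by auto
      show "IC q s'" using v unfolding valid_def IC_def s'_def by auto
      show "IR q s'" unfolding IR_def
      proof
        fix x :: "real^'k" assume x: "x \<in> orthant"
        have "q x \<bullet> x - s x \<ge> q 0 \<bullet> x - s 0" using v x zero_orth unfolding valid_def IC_def by blast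
        moreover have "q 0 \<in> \<Gamma>" using v zero_orth by (auto simp: valid_def mechanism_def)
        ultimately show "q x \<bullet> x - s' x \<ge> 0" using inner_bd[of "q 0" x] x by (simp add: s'_def)
      qed
      show "s' 0 = 0" by (simp add: s'_def)
    qed
    moreover have "revenue M X s' = revenue M X s - s 0"
      unfolding revenue_def s'_def using True by (simp add: prob_space)
    ultimately show ?thesis using s0 by (intro exI[of _ q] exI[of _ s']) auto
  next
    case False
    hence "revenue M X s = 0" unfolding revenue_def by (simp add: not_integrable_integral_eq)
    thus ?thesis using zero_nv zero_rev by fastforce
  qed
  have Rev_eq: "Rev \<Gamma> M X = (SUP qs \<in> {(q, s). valid q s}. ereal (revenue M X (snd qs)))"
    by (simp add: Rev_def valid_def)
  have Rev_ge: "ereal (revenue M X s) \<le> Rev \<Gamma> M X" if "valid q s" for q s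
    unfolding Rev_eq using that by (intro SUP_upper2[of "(q, s)"]) auto
  have Rev_le: "Rev \<Gamma> M X \<le> ereal (C * expectation (\<lambda>\<omega>. norm (X \<omega>)))"
    unfolding Rev_eq by (intro SUP_least) (use rev_le in auto)
  have "ereal 0 \<le> Rev \<Gamma> M X" using Rev_ge[of "\<lambda>_. g0" "\<lambda>_. 0"] zero_nv zero_rev
    by (simp add: nvalid_def)
  define R where "R = real_of_ereal (Rev \<Gamma> M X)"
  have RevR: "Rev \<Gamma> M X = ereal R" and R0: "0 \<le> R"
    using \<open>ereal 0 \<le> Rev \<Gamma> M X\<close> Rev_le unfolding R_def
    by (cases "Rev \<Gamma> M X"; auto)+

  have approx: "\<forall>n. \<exists>p. nvalid (fst p) (snd p) \<and> R - inverse (real (Suc n)) < revenue M X (snd p)"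
  proof
    fix n
    have "ereal (R - inverse (real (Suc n))) < Rev \<Gamma> M X" using RevR by simp
    then obtain qs where qs: "qs \<in> {(q, s). valid q s}" "ereal (R - inverse (real (Suc n))) < ereal (revenue M X (snd qs))"
      unfolding Rev_eq less_SUP_iff by blast
    obtain q' s' where "nvalid q' s'" "revenue M X (snd qs) \<le> revenue M X s'"
      using normalize[of "fst qs" "snd qs"] qs(1) by (cases qs) auto
    thus "\<exists>p. nvalid (fst p) (snd p) \<and> R - inverse (real (Suc n)) < revenue M X (snd p)"
      using qs(2) by (intro exI[of _ "(q', s')"]) auto
  qed
  then obtain P where P: "\<And>n. nvalid (fst (P n)) (snd (P n)) \<and> R - inverse (real (Suc n)) < revenue M X (snd (P n))"
    by metis
  define Q where "Q n = fst (P n)" for n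
  define Sn where "Sn n = snd (P n)" for n
  have nvn: "nvalid (Q n) (Sn n)" for n using P by (simp add: Q_def Sn_def)
  have vn: "valid (Q n) (Sn n)" for n using nvn by (simp add: nvalid_def)
  have revn: "R - inverse (real (Suc n)) < revenue M X (Sn n)" "revenue M X (Sn n) \<le> R" for n
    using P[of n] Rev_ge[OF vn[of n]] RevR by (auto simp: Sn_def)
  have rev_lim: "(\<lambda>n. revenue M X (Sn n)) \<longlonglongrightarrow> R"
  proof (rule tendsto_sandwich[of "\<lambda>n. R - inverse (real (Suc n))" _ _ "\<lambda>n. R"])
    show "\<forall>\<^sub>F n in sequentially. R - inverse (real (Suc n)) \<le> revenue M X (Sn n)"
      using revn(1) by (auto intro!: always_eventually less_imp_le)
    show "\<forall>\<^sub>F n in sequentially. revenue M X (Sn n) \<le> R" using revn(2) by auto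
    show "(\<lambda>n. R - inverse (real (Suc n))) \<longlonglongrightarrow> R"
      using tendsto_diff[OF tendsto_const LIMSEQ_inverse_real_of_nat, of R] by simp
  qed simp
  have Sn_meas[measurable]: "Sn n \<in> borel_measurable borel" for n
    using vn[of n] by (simp add: valid_def mechanism_def)
  define u where "u n x = Q n x \<bullet> x - Sn n x" for n x
  obtain D :: "(real^'k) set" where D: "countable D" "D \<subseteq> orthant"
    "\<And>x \<delta>. x \<in> orthant \<Longrightarrow> \<delta> > 0 \<Longrightarrow> \<exists>d\<in>D. dist d x < \<delta>"
    using dense_orthant by blast
  have "\<exists>r. strict_mono r \<and> (\<forall>d\<in>D. convergent (\<lambda>n. u (r n) d))"
  proof (rule diag_conv[OF D(1)])
    fix d assume "d \<in> D"
    hence d: "d \<in> orthant" using D(2) by auto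
    show "bounded (range (\<lambda>n. u n d))" unfolding bounded_iff
      using nv_bounds[OF nvn d] by (intro exI[of _ "C * norm d"]) (auto simp: u_def)
  qed
  then obtain r where r: "strict_mono r" "\<forall>d\<in>D. convergent (\<lambda>n. u (r n) d)" by blast
  have conv: "convergent (\<lambda>n. u (r n) x)" if "x \<in> orthant" for x
    by (rule conv_from_dense[OF D(3) D(2) _ C(1) r(2) that]) (use nv_lip vn in \<open>auto simp: u_def\<close>)
  define U where "U x = lim (\<lambda>n. u (r n) x)" for x
  have Ulim: "(\<lambda>n. u (r n) x) \<longlonglongrightarrow> U x" if "x \<in> orthant" for x
    using conv[OF that] by (simp add: U_def convergent_LIMSEQ_iff)
  define Lm where "Lm x = limsup (\<lambda>n. ennreal (Sn (r n) x))" for x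
  define S where "S x = indicator orthant x * enn2real (Lm x)" for x
  have Lm_bd: "Lm x \<le> ennreal (C * norm x)" if "x \<in> orthant" for x
    unfolding Lm_def using nv_bounds[OF nvn that] by (intro Limsup_bounded always_eventually) (auto intro!: ennreal_leI)
  have Lm_fin: "Lm x < top" if "x \<in> orthant" for x
    using Lm_bd[OF that] by (simp add: le_less_trans)
  have S_bd: "0 \<le> S x \<and> S x \<le> C * norm x" if "x \<in> orthant" for x
  proof -
    have "enn2real (Lm x) \<le> enn2real (ennreal (C * norm x))"
      using Lm_bd[OF that] by (rule enn2real_mono) simp
    thus ?thesis using that C(1) by (simp add: S_def)
  qed
  have S_Lm: "ennreal (S x) = Lm x" if "x \<in> orthant" for x
    using that Lm_fin[OF that] by (simp add: S_def)
  have key: "\<exists>g. g \<in> \<Gamma> \<and> g \<bullet> x = S x + U x \<and> (\<forall>y\<in>orthant. U x + g \<bullet> (y - x) \<le> U y)"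
    if x: "x \<in> orthant" for x
  proof -
    obtain \<phi> :: "nat \<Rightarrow> nat" where \<phi>: "strict_mono \<phi>" "((\<lambda>n. ennreal (Sn (r n) x)) \<circ> \<phi>) \<longlonglongrightarrow> Lm x"
      unfolding Lm_def using limsup_subseq_lim by blast
    have "(\<lambda>j. enn2real (ennreal (Sn (r (\<phi> j)) x))) \<longlonglongrightarrow> S x"
    proof (rule tendsto_enn2real)
      show "(\<lambda>j. ennreal (Sn (r (\<phi> j)) x)) \<longlonglongrightarrow> ennreal (S x)"
        using \<phi>(2) S_Lm[OF x] by (simp add: o_def)
      show "0 \<le> S x" using S_bd[OF x] by simp
    qed
    hence Sphi: "(\<lambda>j. Sn (r (\<phi> j)) x) \<longlonglongrightarrow> S x" using nv_bounds[OF nvn x] by simp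
    have inG: "\<forall>j. Q (r (\<phi> j)) x \<in> \<Gamma>" using vn x by (auto simp: valid_def mechanism_def)
    obtain g \<psi> where g: "g \<in> \<Gamma>" "strict_mono (\<psi> :: nat \<Rightarrow> nat)" "((\<lambda>j. Q (r (\<phi> j)) x) \<circ> \<psi>) \<longlonglongrightarrow> g"
      using seq_compactE[OF compact_imp_seq_compact[OF G_cpt] inG] by blast
    define k where "k j = r (\<phi> (\<psi> j))" for j
    have Sk: "(\<lambda>j. Sn (k j) x) \<longlonglongrightarrow> S x"
      using LIMSEQ_subseq_LIMSEQ[OF Sphi g(2)] by (simp add: k_def o_def)
    have Qk: "(\<lambda>j. Q (k j) x) \<longlonglongrightarrow> g" using g(3) by (simp add: k_def o_def)
    have mono2: "strict_mono (\<phi> \<circ> \<psi>)" using \<phi>(1) g(2) by (rule strict_mono_o)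
    have Uk: "(\<lambda>j. u (k j) y) \<longlonglongrightarrow> U y" if "y \<in> orthant" for y
      using LIMSEQ_subseq_LIMSEQ[OF Ulim[OF that] mono2] by (simp add: k_def o_def)
    have "(\<lambda>j. Q (k j) x \<bullet> x) \<longlonglongrightarrow> g \<bullet> x" using Qk by (intro tendsto_intros)
    moreover have "(\<lambda>j. Q (k j) x \<bullet> x) \<longlonglongrightarrow> U x + S x"
    proof -
      have "(\<lambda>j. u (k j) x + Sn (k j) x) \<longlonglongrightarrow> U x + S x" using Uk[OF x] Sk by (intro tendsto_intros)
      thus ?thesis by (simp add: u_def)
    qed
    ultimately have gx: "g \<bullet> x = S x + U x" using LIMSEQ_unique by fastforce
    have "U x + g \<bullet> (y - x) \<le> U y" if y: "y \<in> orthant" for y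
    proof (rule LIMSEQ_le)
      show "(\<lambda>j. u (k j) x + Q (k j) x \<bullet> (y - x)) \<longlonglongrightarrow> U x + g \<bullet> (y - x)"
        using Uk[OF x] Qk by (intro tendsto_intros)
      show "(\<lambda>j. u (k j) y) \<longlonglongrightarrow> U y" using Uk[OF y] .
      show "\<exists>N. \<forall>n\<ge>N. u (k n) x + Q (k n) x \<bullet> (y - x) \<le> u (k n) y"
        using nv_sub[OF vn x y] by (auto simp: u_def)
    qed
    thus ?thesis using g(1) gx by blast
  qed
  define q where "q x = (SOME g. g \<in> \<Gamma> \<and> g \<bullet> x = S x + U x \<and> (\<forall>y\<in>orthant. U x + g \<bullet> (y - x) \<le> U y))" for x
  have qprop: "q x \<in> \<Gamma> \<and> q x \<bullet> x = S x + U x \<and> (\<forall>y\<in>orthant. U x + q x \<bullet> (y - x) \<le> U y)"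
    if "x \<in> orthant" for x
    unfolding q_def by (rule someI_ex[OF key[OF that]])
  have U0: "0 \<le> U x" if "x \<in> orthant" for x
    by (rule LIMSEQ_le_const[OF Ulim[OF that]]) (use nv_bounds[OF nvn that] in \<open>auto simp: u_def\<close>)
  have S_meas: "S \<in> borel_measurable borel" unfolding S_def Lm_def by measurable
  have validS: "valid q S"
    unfolding valid_def
  proof (intro conjI)
    show "mechanism \<Gamma> q S" unfolding mechanism_def using qprop S_meas by auto
    show "IC q S" unfolding IC_def
    proof (intro ballI)
      fix x y :: "real^'k" assume x: "x \<in> orthant" and y: "y \<in> orthant"
      have "U y + q y \<bullet> (x - y) \<le> U x" using qprop[OF y] x by blast
      thus "q y \<bullet> x - S y \<le> q x \<bullet> x - S x" using qprop[OF x] qprop[OF y]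
        by (simp add: inner_diff_right)
    qed
    show "IR q S" unfolding IR_def using qprop U0 by auto
  qed
  have SX_int: "integrable M (\<lambda>\<omega>. S (X \<omega>))"
  proof (rule Bochner_Integration.integrable_bound[OF Cint])
    show "(\<lambda>\<omega>. S (X \<omega>)) \<in> borel_measurable M" using S_meas Xm by (rule measurable_compose[rotated])
    show "AE \<omega> in M. norm (S (X \<omega>)) \<le> norm (C * norm (X \<omega>))"
      using S_bd Xo C(1) by (auto intro!: AE_I2)
  qed
  have revS_nonneg: "0 \<le> revenue M X S"
    unfolding revenue_def using S_bd Xo by (auto intro!: integral_nonneg_AE AE_I2)
  have "ennreal R \<le> ennreal (revenue M X S)"
  proof -
    have lhs: "limsup (\<lambda>n. \<integral>\<^sup>+\<omega>. ennreal (Sn (r n) (X \<omega>)) \<partial>M) = ennreal R"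
    proof -
      have "(\<integral>\<^sup>+\<omega>. ennreal (Sn (r n) (X \<omega>)) \<partial>M) = ennreal (revenue M X (Sn (r n)))" for n
        unfolding revenue_def using nv_int[OF nvn] nv_bounds[OF nvn] Xo
        by (intro nn_integral_eq_integral) (auto intro!: AE_I2)
      moreover have "(\<lambda>n. ennreal (revenue M X (Sn (r n)))) \<longlonglongrightarrow> ennreal R"
        using LIMSEQ_subseq_LIMSEQ[OF rev_lim r(1)] by (intro tendsto_ennrealI) (simp add: o_def)
      ultimately show ?thesis by (simp add: lim_imp_Limsup)
    qed
    have rhs: "(\<integral>\<^sup>+\<omega>. limsup (\<lambda>n. ennreal (Sn (r n) (X \<omega>))) \<partial>M) = ennreal (revenue M X S)"
    proof -
      have "(\<integral>\<^sup>+\<omega>. limsup (\<lambda>n. ennreal (Sn (r n) (X \<omega>))) \<partial>M) = (\<integral>\<^sup>+\<omega>. ennreal (S (X \<omega>)) \<partial>M)"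
        using Xo by (intro nn_integral_cong) (simp add: S_Lm Lm_def)
      also have "\<dots> = ennreal (revenue M X S)"
        unfolding revenue_def using SX_int S_bd Xo
        by (intro nn_integral_eq_integral) (auto intro!: AE_I2)
      finally show ?thesis .
    qed
    have "limsup (\<lambda>n. \<integral>\<^sup>+\<omega>. ennreal (Sn (r n) (X \<omega>)) \<partial>M) \<le> (\<integral>\<^sup>+\<omega>. limsup (\<lambda>n. ennreal (Sn (r n) (X \<omega>))) \<partial>M)"
    proof (rule nn_integral_limsup[where w="\<lambda>\<omega>. ennreal (C * norm (X \<omega>))"])
      show "(\<lambda>\<omega>. ennreal (Sn (r n) (X \<omega>))) \<in> borel_measurable M" for n by measurable
      show "(\<lambda>\<omega>. ennreal (C * norm (X \<omega>))) \<in> borel_measurable M" by measurable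
      show "AE \<omega> in M. ennreal (Sn (r n) (X \<omega>)) \<le> ennreal (C * norm (X \<omega>))" for n
        using nv_bounds[OF nvn] Xo by (auto intro!: AE_I2 ennreal_leI)
      have "(\<integral>\<^sup>+\<omega>. ennreal (C * norm (X \<omega>)) \<partial>M) = ennreal (expectation (\<lambda>\<omega>. C * norm (X \<omega>)))"
        using Cint C(1) by (intro nn_integral_eq_integral) auto
      thus "(\<integral>\<^sup>+\<omega>. ennreal (C * norm (X \<omega>)) \<partial>M) < \<infinity>" by simp
    qed
    thus ?thesis using lhs rhs by simp
  qed
  hence "R \<le> revenue M X S" using revS_nonneg by simp
  moreover have "revenue M X S \<le> R" using Rev_ge[OF validS] RevR by simp
  ultimately have "ereal (revenue M X S) = Rev \<Gamma> M X" using RevR by simp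
  thus ?thesis using validS unfolding valid_def by blast
qed

end
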